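(* Let $(A,\succ,\prec)$ be a Leibniz-dendriform algebra and $r\in A\otimes A$ such that $S(r)=0$ and $r+\tau(r)$ is invariant (so $(A,\succ,\prec,\Delta_{\succ,r},\Delta_{\prec,r})$ is quasi-triangular). Then $\tau(r)$ also satisfies $S(\tau(r))=0$ and $\tau(r)+\tau(\tau(r))$ is invariant, so $(A,\succ,\prec,\Delta_{\succ,\tau(r)},\Delta_{\prec,\tau(r)})$ is quasi-triangular. If moreover $T_{r+\tau(r)}$ is a linear isomorphism (factorizable case), then so is $T_{\tau(r)+r}$, so the latter bialgebra is factorizable as well.
   Context: $\langle\cdot,\cdot\rangle$ is the natural pairing, $I$ the identity, $\tau(a\otimes b)=b\otimes a$. A Leibniz-dendriform algebra is a vector space $A$ with bilinear operations $\succ,\prec$ such that, with $x\circ y:=x\succ y+x\prec y$, for all $x,y,z$: $(x\circ y)\succ z=x\succ(y\succ z)-y\succ(x\succ z)$, $y\prec(x\circ z)+(x\succ y)\prec z=x\succ(y\prec z)$, $x\prec(y\circ z)=(x\prec y)\prec z+y\succ(x\prec z)$. Write $x\odot y:=x\succ y+y\prec x$, $x\star y:=x\circ y+y\circ x$; $L_*(x)y=x*y$, $R_*(x)y=y*x$; $L_\odot:=L_\succ+R_\prec$, $L_\star:=L_\circ+R_\circ$. For $r=\sum_ia_i\otimes b_i$: $T_r:A^*\to A$, $\langle T_r(\zeta),\eta\rangle=\langle r,\zeta\otimes\eta\rangle$; $S(r):=\sum_{i,j}\big(a_i\otimes a_j\otimes (b_j\circ b_i)-a_i\otimes (b_i\odot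 a_j)\otimes b_j-(a_i\succ a_j)\otimes b_i\otimes b_j\big)$. $s\in A\otimes A$ is invariant if for all $x$: $(L_\odot(x)\otimes I-I\otimes R_\circ(x))s=0$ and $(L_\star(x)\otimes I-I\otimes R_\prec(x))\tau(s)=0$. Coboundary maps: $\Delta_{\succ,r}(x)=(L_\odot(x)\otimes I-I\otimes R_\circ(x))r$, $\Delta_{\prec,r}(x)=(L_\star(x)\otimes I-I\otimes R_\prec(x))\tau(r)$. The bialgebra $(A,\succ,\prec,\Delta_{\succ,r},\Delta_{\prec,r})$ is called quasi-triangular if $S(r)=0$ and $r+\tau(r)$ is invariant, and factorizable if in addition $T_{r+\tau(r)}:A^*\to A$ is a linear isomorphism. *)

theory Defs
  imports Main
begin

text \<open>Finite-dimensional vector space A = 'k^'i (functions 'i => 'k, 'i a finite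
  index type, 'k a field), with standard basis. Tensors in A (x) A and A (x) A (x) A
  are represented by their coefficient arrays w.r.t. the basis.\<close>

type_synonym ('i,'k) vec = "'i \<Rightarrow> 'k"
type_synonym ('i,'k) tens2 = "'i \<Rightarrow> 'i \<Rightarrow> 'k"
type_synonym ('i,'k) tens3 = "'i \<Rightarrow> 'i \<Rightarrow> 'i \<Rightarrow> 'k"
type_synonym ('i,'k) op = "('i,'k) vec \<Rightarrow> ('i,'k) vec \<Rightarrow> ('i,'k) vec"

definition bvec :: "'i \<Rightarrow> ('i,'k::field) vec" where
  "bvec p = (\<lambda>q. if q = p then 1 else 0)"

definition vadd :: "('i,'k::field) vec \<Rightarrow> ('i,'k) vec \<Rightarrow> ('i,'k) vec" where
  "vadd x y = (\<lambda>i. x i + y i)"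

definition vscale :: "'k::field \<Rightarrow> ('i,'k) vec \<Rightarrow> ('i,'k) vec" where
  "vscale c x = (\<lambda>i. c * x i)"

definition bilinear_op :: "('i,'k::field) op \<Rightarrow> bool" where
  "bilinear_op m \<longleftrightarrow>
     (\<forall>x y z. m (vadd x y) z = vadd (m x z) (m y z)) \<and>
     (\<forall>x y z. m x (vadd y z) = vadd (m x y) (m x z)) \<and>
     (\<forall>c x y. m (vscale c x) y = vscale c (m x y)) \<and>
     (\<forall>c x y. m x (vscale c y) = vscale c (m x y))"

definition circ :: "('i,'k::field) op \<Rightarrow> ('i,'k) op \<Rightarrow> ('i,'k) op" where
  "circ sc pr x y = vadd (sc x y) (pr x y)"

definition odot :: "('i,'k::field) op \<Rightarrow> ('i,'k) op \<Rightarrow> ('i,'k) op" where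
  "odot sc pr x y = vadd (sc x y) (pr y x)"

definition star :: "('i,'k::field) op \<Rightarrow> ('i,'k) op \<Rightarrow> ('i,'k) op" where
  "star sc pr x y = vadd (circ sc pr x y) (circ sc pr y x)"

definition leibniz_dendriform :: "('i,'k::field) op \<Rightarrow> ('i,'k) op \<Rightarrow> bool" where
  "leibniz_dendriform sc pr \<longleftrightarrow> bilinear_op sc \<and> bilinear_op pr \<and>
    (\<forall>x y z. sc (circ sc pr x y) z = (\<lambda>i. sc x (sc y z) i - sc y (sc x z) i)) \<and>
    (\<forall>x y z. vadd (pr y (circ sc pr x z)) (pr (sc x y) z) = sc x (pr y z)) \<and>
    (\<forall>x y z. pr x (circ sc pr y z) = vadd (pr (pr x y) z) (sc y (pr x z)))"

text \<open>(f (x) g) t for linear maps f, g on A and t in A (x) A.\<close>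
definition tmap :: "(('i::finite,'k::field) vec \<Rightarrow> ('i,'k) vec) \<Rightarrow> (('i,'k) vec \<Rightarrow> ('i,'k) vec)
    \<Rightarrow> ('i,'k) tens2 \<Rightarrow> ('i,'k) tens2" where
  "tmap f g t = (\<lambda>a b. \<Sum>p\<in>UNIV. \<Sum>q\<in>UNIV. t p q * f (bvec p) a * g (bvec q) b)"

definition tau :: "('i,'k) tens2 \<Rightarrow> ('i,'k) tens2" where
  "tau t = (\<lambda>p q. t q p)"

definition tadd :: "('i,'k::field) tens2 \<Rightarrow> ('i,'k) tens2 \<Rightarrow> ('i,'k) tens2" where
  "tadd s t = (\<lambda>p q. s p q + t p q)"

definition tsub :: "('i,'k::field) tens2 \<Rightarrow> ('i,'k) tens2 \<Rightarrow> ('i,'k) tens2" where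
  "tsub s t = (\<lambda>p q. s p q - t p q)"

text \<open>S(r), with r = sum_{p,q} r p q e_p (x) e_q, written out in coordinates:
  sum_{i,j} a_i (x) a_j (x) (b_j o b_i) - a_i (x) (b_i odot a_j) (x) b_j - (a_i > a_j) (x) b_i (x) b_j.\<close>
definition S_op :: "('i::finite,'k::field) op \<Rightarrow> ('i,'k) op \<Rightarrow> ('i,'k) tens2 \<Rightarrow> ('i,'k) tens3" where
  "S_op sc pr r = (\<lambda>a b c.
      (\<Sum>p\<in>UNIV. \<Sum>q\<in>UNIV. \<Sum>s\<in>UNIV. \<Sum>t\<in>UNIV.
         r p q * r s t *
         (bvec p a * bvec s b * circ sc pr (bvec t) (bvec q) c
          - bvec p a * odot sc pr (bvec q) (bvec s) b * bvec t c
          - sc (bvec p) (bvec s) a * bvec q b * bvec t c)))"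

definition invariant :: "('i::finite,'k::field) op \<Rightarrow> ('i,'k) op \<Rightarrow> ('i,'k) tens2 \<Rightarrow> bool" where
  "invariant sc pr s \<longleftrightarrow> (\<forall>x.
     tsub (tmap (odot sc pr x) id s) (tmap id (\<lambda>y. circ sc pr y x) s) = (\<lambda>_ _. 0) \<and>
     tsub (tmap (star sc pr x) id (tau s)) (tmap id (\<lambda>y. pr y x) (tau s)) = (\<lambda>_ _. 0))"

text \<open>T_r : A^* -> A, with A^* identified with coordinate functionals via the
  natural pairing <zeta, x> = sum_i zeta i * x i.\<close>
definition T_map :: "('i::finite,'k::field) tens2 \<Rightarrow> ('i,'k) vec \<Rightarrow> ('i,'k) vec" where
  "T_map r \<zeta> = (\<lambda>q. \<Sum>p\<in>UNIV. r p q * \<zeta> p)"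

definition quasi_triangular :: "('i::finite,'k::field) op \<Rightarrow> ('i,'k) op \<Rightarrow> ('i,'k) tens2 \<Rightarrow> bool" where
  "quasi_triangular sc pr r \<longleftrightarrow> S_op sc pr r = (\<lambda>_ _ _. 0) \<and> invariant sc pr (tadd r (tau r))"

definition factorizable :: "('i::finite,'k::field) op \<Rightarrow> ('i,'k) op \<Rightarrow> ('i,'k) tens2 \<Rightarrow> bool" where
  "factorizable sc pr r \<longleftrightarrow> quasi_triangular sc pr r \<and> bij (T_map (tadd r (tau r)))"

end

theory Submission
  imports Defs
begin
lemma bvec_mult_l: "bvec p a * x = (if p = a then x else 0)" by (simp add: bvec_def)
lemma bvec_mult_r: "x * bvec p a = (if p = a then x else 0)" by (simp add: bvec_def)
lemma sum_if_out: "(\<Sum>q\<in>A. (if P then f q else 0)) = (if P then (\<Sum>q\<in>A. f q) else 0)" by simp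

lemma S_coord:
  fixes sc pr :: "('i::finite, 'k::field) op" and r :: "('i,'k) tens2"
  shows "S_op sc pr r a b c =
   (\<Sum>q\<in>UNIV. \<Sum>t\<in>UNIV. r a q * r b t * (sc (bvec t) (bvec q) c + pr (bvec t) (bvec q) c))
 - (\<Sum>q\<in>UNIV. \<Sum>s\<in>UNIV. r a q * r s c * (sc (bvec q) (bvec s) b + pr (bvec s) (bvec q) b))
 - (\<Sum>p\<in>UNIV. \<Sum>s\<in>UNIV. r p b * r s c * sc (bvec p) (bvec s) a)"
proof -
  have "S_op sc pr r a b c =
   (\<Sum>p\<in>UNIV. \<Sum>q\<in>UNIV. \<Sum>s\<in>UNIV. \<Sum>t\<in>UNIV. bvec p a * (bvec s b * (r p q * r s t * (sc (bvec t) (bvec q) c + pr (bvec t) (bvec q) c)))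
 - bvec p a * (bvec t c * (r p q * r s t * (sc (bvec q) (bvec s) b + pr (bvec s) (bvec q) b)))
 - bvec q b * (bvec t c * (r p q * r s t * sc (bvec p) (bvec s) a)))"
    unfolding S_op_def circ_def odot_def vadd_def
    by (intro sum.cong refl) (simp add: algebra_simps)
  also have "\<dots> = 
   (\<Sum>p\<in>UNIV. \<Sum>q\<in>UNIV. \<Sum>s\<in>UNIV. \<Sum>t\<in>UNIV. bvec p a * (bvec s b * (r p q * r s t * (sc (bvec t) (bvec q) c + pr (bvec t) (bvec q) c))))
 - (\<Sum>p\<in>UNIV. \<Sum>q\<in>UNIV. \<Sum>s\<in>UNIV. \<Sum>t\<in>UNIV. bvec p a * (bvec t c * (r p q * r s t * (sc (bvec q) (bvec s) b + pr (bvec s) (bvec q) b))))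
 - (\<Sum>p\<in>UNIV. \<Sum>q\<in>UNIV. \<Sum>s\<in>UNIV. \<Sum>t\<in>UNIV. bvec q b * (bvec t c * (r p q * r s t * sc (bvec p) (bvec s) a)))"
    by (simp only: sum_subtractf)
  also have "(\<Sum>p\<in>UNIV. \<Sum>q\<in>UNIV. \<Sum>s\<in>UNIV. \<Sum>t\<in>UNIV. bvec p a * (bvec s b * (r p q * r s t * (sc (bvec t) (bvec q) c + pr (bvec t) (bvec q) c))))
     = (\<Sum>q\<in>UNIV. \<Sum>t\<in>UNIV. r a q * r b t * (sc (bvec t) (bvec q) c + pr (bvec t) (bvec q) c))"
    by (simp add: bvec_mult_l sum_if_out)
  also have "(\<Sum>p\<in>UNIV. \<Sum>q\<in>UNIV. \<Sum>s\<in>UNIV. \<Sum>t\<in>UNIV. bvec p a * (bvec t c * (r p q * r s t * (sc (bvec q) (bvec s) b + pr (bvec s) (bvec q) b))))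
     = (\<Sum>q\<in>UNIV. \<Sum>s\<in>UNIV. r a q * r s c * (sc (bvec q) (bvec s) b + pr (bvec s) (bvec q) b))"
    by (simp add: bvec_mult_l sum_if_out)
  also have "(\<Sum>p\<in>UNIV. \<Sum>q\<in>UNIV. \<Sum>s\<in>UNIV. \<Sum>t\<in>UNIV. bvec q b * (bvec t c * (r p q * r s t * sc (bvec p) (bvec s) a)))
     = (\<Sum>p\<in>UNIV. \<Sum>s\<in>UNIV. r p b * r s c * sc (bvec p) (bvec s) a)"
    by (simp add: bvec_mult_l sum_if_out)
  finally show ?thesis .
qed

lemma dsum_zero:
  fixes E Q :: "'a \<Rightarrow> 'a \<Rightarrow> 'k::ab_group_add"
  assumes "\<And>x y. E x y = Q x y - Q y x"
  shows "(\<Sum>x\<in>A. \<Sum>y\<in>A. E x y) = 0"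
proof -
  have "(\<Sum>x\<in>A. \<Sum>y\<in>A. E x y) = (\<Sum>x\<in>A. \<Sum>y\<in>A. Q x y) - (\<Sum>x\<in>A. \<Sum>y\<in>A. Q y x)"
    by (simp add: assms sum_subtractf)
  also have "(\<Sum>x\<in>A. \<Sum>y\<in>A. Q y x) = (\<Sum>x\<in>A. \<Sum>y\<in>A. Q x y)"
    by (rule sum.swap)
  finally show ?thesis by simp
qed

lemma S_tau_zero:
  fixes sc pr :: "('i::finite, 'k::field) op" and r :: "('i,'k) tens2"
  assumes S0: "\<And>a b c. S_op sc pr r a b c = 0"
    and I1: "\<And>t a b. ((\<Sum>p\<in>UNIV. (r p b + r b p) * (sc (bvec t) (bvec p) a + pr (bvec p) (bvec t) a)) - (\<Sum>q\<in>UNIV. (r a q + r q a) * (sc (bvec q) (bvec t) b + pr (bvec q) (bvec t) b))) = 0"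
    and I2: "\<And>t a b. ((\<Sum>p\<in>UNIV. (r p b + r b p) * (sc (bvec t) (bvec p) a + pr (bvec t) (bvec p) a + sc (bvec p) (bvec t) a + pr (bvec p) (bvec t) a)) - (\<Sum>q\<in>UNIV. (r a q + r q a) * pr (bvec q) (bvec t) b)) = 0"
  shows "S_op sc pr (tau r) a b c = 0"
proof -
  have "S_op sc pr (tau r) a b c = S_op sc pr (tau r) a b c - S_op sc pr r a c b - S_op sc pr r c a b + S_op sc pr r c b a
     + (\<Sum>t\<in>UNIV. r t b * ((\<Sum>p\<in>UNIV. (r p a + r a p) * (sc (bvec t) (bvec p) c + pr (bvec p) (bvec t) c)) - (\<Sum>q\<in>UNIV. (r c q + r q c) * (sc (bvec q) (bvec t) a + pr (bvec q) (bvec t) a)))) - (\<Sum>t\<in>UNIV. r t b * ((\<Sum>p\<in>UNIV. (r p a + r a p) * (sc (bvec t) (bvec p) c + pr (bvec t) (bvec p) c + sc (bvec p) (bvec t) c + pr (bvec p) (bvec t) c)) - (\<Sum>q\<in>UNIV. (r c q + r q c) * pr (bvec q) (bvec t) a))) + (\<Sum>t\<in>UNIV. r c t * ((\<Sum>p\<in>UNIV. (r p a + r a p) * (sc (bvec t) (bvec p) b + pr (bvec t) (bvec p) b + sc (bvec p) (bvec t) b + pr (bvec p) (bvec t) b)) - (\<Sum>q\<in>UNIV. (r b q + r q b) * pr (bvec q) (bvec t) a)))"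
    using S0 I1 I2 by simp
  also have "\<dots> = (\<Sum>x\<in>UNIV. \<Sum>y\<in>UNIV. (r x a * r y b * sc (bvec y) (bvec x) c) + (r x a * r y b * pr (bvec y) (bvec x) c) - (r x a * r c y * sc (bvec x) (bvec y) b) - (r x a * r c y * pr (bvec y) (bvec x) b) - (r b x * r c y * sc (bvec x) (bvec y) a) - (r a x * r c y * sc (bvec y) (bvec x) b) - (r a x * r c y * pr (bvec y) (bvec x) b) + (r a x * r y b * sc (bvec x) (bvec y) c) + (r a x * r y b * pr (bvec y) (bvec x) c) + (r x c * r y b * sc (bvec x) (bvec y) a) - (r c x * r a y * sc (bvec y) (bvec x) b) - (r c x * r a y * pr (bvec y) (bvec x) b) + (r c x * r y b * sc (bvec x) (bvec y) a) + (r c x * r y b * pr (bvec y) (bvec x) a) + (r x a * r y b * sc (bvec x) (bvec y) c) + (r c x * r b y * sc (bvec y) (bvec x) a) + (r c x * r b y * pr (bvec y) (bvec x) a) - (r c x * r y a * sc (bvec x) (bvec y) b) - (r c x * r y a * pr (bvec y) (bvec x) b) - (r x b * r y a * sc (bvec x) (bvec y) c) + (r x b * r y a * sc (bvec x) (bvec y) c) + (r x b * r y a * pr (bvec y) (bvec x) c) + (r x b * r a y * sc (bvec x) (bvec y) c) + (r x b * r a y * pr (bvec y) (bvec x) c) - (r x b * r c y * sc (bvec y) (bvec x) a) - (r x b * r c y * pr (bvec y) (bvec x) a) - (r x b * r y c * sc (bvec y) (bvec x) a) - (r x b * r y c * pr (bvec y) (bvec x) a) - (r x b * r y a * sc (bvec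 x) (bvec y) c) - (r x b * r y a * pr (bvec x) (bvec y) c) - (r x b * r y a * sc (bvec y) (bvec x) c) - (r x b * r y a * pr (bvec y) (bvec x) c) - (r x b * r a y * sc (bvec x) (bvec y) c) - (r x b * r a y * pr (bvec x) (bvec y) c) - (r x b * r a y * sc (bvec y) (bvec x) c) - (r x b * r a y * pr (bvec y) (bvec x) c) + (r x b * r c y * pr (bvec y) (bvec x) a) + (r x b * r y c * pr (bvec y) (bvec x) a) + (r c x * r y a * sc (bvec x) (bvec y) b) + (r c x * r y a * pr (bvec x) (bvec y) b) + (r c x * r y a * sc (bvec y) (bvec x) b) + (r c x * r y a * pr (bvec y) (bvec x) b) + (r c x * r a y * sc (bvec x) (bvec y) b) + (r c x * r a y * pr (bvec x) (bvec y) b) + (r c x * r a y * sc (bvec y) (bvec x) b) + (r c x * r a y * pr (bvec y) (bvec x) b) - (r c x * r b y * pr (bvec y) (bvec x) a) - (r c x * r y b * pr (bvec y) (bvec x) a))"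
    by (simp add: S_coord tau_def sum_distrib_left sum_subtractf sum.distrib algebra_simps)
  also have "\<dots> = 0"
    by (rule dsum_zero[where Q="\<lambda>x y. (r x a * r y b * sc (bvec y) (bvec x) c) + (r x a * r y b * pr (bvec y) (bvec x) c) - (r x a * r c y * sc (bvec x) (bvec y) b) - (r x a * r c y * pr (bvec y) (bvec x) b) - (r b x * r c y * sc (bvec x) (bvec y) a) - (r a x * r c y * sc (bvec y) (bvec x) b) - (r a x * r c y * pr (bvec y) (bvec x) b) + (r y b * r a x * sc (bvec x) (bvec y) c) + (r y b * r a x * pr (bvec y) (bvec x) c) + (r x c * r y b * sc (bvec x) (bvec y) a) + (r y b * r c x * sc (bvec x) (bvec y) a) + (r x a * r y b * sc (bvec x) (bvec y) c)"]) (simp add: algebra_simps)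
  finally show ?thesis .
qed

lemma tmap_id_r: "tmap f id s a b = (\<Sum>p\<in>UNIV. s p b * f (bvec p) a)"
  unfolding tmap_def by (simp add: bvec_mult_r sum_if_out)
lemma if_mult0: "(if P then x else 0) * (y::'a::field) = (if P then x * y else 0)" by simp
lemma tmap_id_l: "tmap id g s a b = (\<Sum>q\<in>UNIV. s a q * g (bvec q) b)"
  unfolding tmap_def by (simp add: bvec_mult_r if_mult0 sum_if_out)

lemma inv_coord:
  fixes sc pr :: "('i::finite, 'k::field) op" and w :: "('i,'k) tens2"
  assumes "invariant sc pr w"
  shows "(\<Sum>p\<in>UNIV. w p b * (sc (bvec t) (bvec p) a + pr (bvec p) (bvec t) a))
       - (\<Sum>q\<in>UNIV. w a q * (sc (bvec q) (bvec t) b + pr (bvec q) (bvec t) b)) = 0"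
    and "(\<Sum>p\<in>UNIV. w b p * (sc (bvec t) (bvec p) a + pr (bvec t) (bvec p) a + sc (bvec p) (bvec t) a + pr (bvec p) (bvec t) a))
       - (\<Sum>q\<in>UNIV. w q a * pr (bvec q) (bvec t) b) = 0"
proof -
  from assms have h1: "tsub (tmap (odot sc pr (bvec t)) id w) (tmap id (\<lambda>y. circ sc pr y (bvec t)) w) a b = 0"
    and h2: "tsub (tmap (star sc pr (bvec t)) id (tau w)) (tmap id (\<lambda>y. pr y (bvec t)) (tau w)) a b = 0"
    unfolding invariant_def by metis+
  from h1 show "(\<Sum>p\<in>UNIV. w p b * (sc (bvec t) (bvec p) a + pr (bvec p) (bvec t) a))
       - (\<Sum>q\<in>UNIV. w a q * (sc (bvec q) (bvec t) b + pr (bvec q) (bvec t) b)) = 0"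
    by (simp add: tsub_def tmap_id_r tmap_id_l odot_def circ_def vadd_def)
  from h2 show "(\<Sum>p\<in>UNIV. w b p * (sc (bvec t) (bvec p) a + pr (bvec t) (bvec p) a + sc (bvec p) (bvec t) a + pr (bvec p) (bvec t) a))
       - (\<Sum>q\<in>UNIV. w q a * pr (bvec q) (bvec t) b) = 0"
    by (simp add: tsub_def tmap_id_r tmap_id_l star_def circ_def vadd_def tau_def add_ac)
qed

theorem mainTheorem9:
  fixes sc pr :: "('i::finite, 'k::field) op" and r :: "('i,'k) tens2"
  assumes "leibniz_dendriform sc pr"
    and "quasi_triangular sc pr r"
  shows "quasi_triangular sc pr (tau r)
         \<and> (factorizable sc pr r \<longrightarrow> factorizable sc pr (tau r))"
proof -
  have eq: "tadd (tau r) (tau (tau r)) = tadd r (tau r)"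
    by (rule ext)+ (simp add: tadd_def tau_def add.commute)
  from assms(2) have S0: "S_op sc pr r = (\<lambda>_ _ _. 0)" and inv: "invariant sc pr (tadd r (tau r))"
    unfolding quasi_triangular_def by auto
  have "S_op sc pr (tau r) a b c = 0" for a b c
  proof (rule S_tau_zero)
    show "S_op sc pr r a b c = 0" for a b c using S0 by simp
    show "((\<Sum>p\<in>UNIV. (r p b + r b p) * (sc (bvec t) (bvec p) a + pr (bvec p) (bvec t) a)) - (\<Sum>q\<in>UNIV. (r a q + r q a) * (sc (bvec q) (bvec t) b + pr (bvec q) (bvec t) b))) = 0" for t a b
      using inv_coord(1)[OF inv, of b t a] by (simp add: tadd_def tau_def)
    show "((\<Sum>p\<in>UNIV. (r p b + r b p) * (sc (bvec t) (bvec p) a + pr (bvec t) (bvec p) a + sc (bvec p) (bvec t) a + pr (bvec p) (bvec t) a)) - (\<Sum>q\<in>UNIV. (r a q + r q a) * pr (bvec q) (bvec t) b)) = 0" for t a b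
      using inv_coord(2)[OF inv, of b t a] by (simp add: tadd_def tau_def add.commute)
  qed
  then have qt: "quasi_triangular sc pr (tau r)"
    unfolding quasi_triangular_def eq using inv by (simp add: fun_eq_iff)
  moreover have "factorizable sc pr r \<longrightarrow> factorizable sc pr (tau r)"
    using qt eq unfolding factorizable_def by simp
  ultimately show ?thesis by blast
qed
end
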